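(* Let $n\geqslant 2$ and let $G$ (gene tree) and $S$ (species tree) be caterpillar trees whose leaves are bijectively labeled by the same set $X$ of $n$ labels, with canonical label vectors $\mathbf g=(g_1,\dots,g_n)$ and $\mathbf s=(s_1,\dots,s_n)$; $G$ and $S$ need not have the same labeled topology. For a label $x$, let $\sigma(x)$ denote the index of $x$ in $\mathbf s$, and for $1\leqslant j\leqslant n-1$ put $F(j)=\max\{\sigma(g_1),\dots,\sigma(g_{j+1})\}-1$. Define the roadblock set $$B_{G,S}=\{(i,j)\in\mathbb Z^2 : 1\leqslant j\leqslant i\leqslant n-1,\ i<F(j)\}.$$ Then there is a bijection between the set of coalescent histories for $(G,S)$ and the set of monotonic lattice paths from $(0,0)$ to $(n-1,n-1)$ that do not cross above the diagonal $y=x$ and that pass through no point of $B_{G,S}$.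
   Context: All trees are binary, rooted and leaf-labeled. A caterpillar tree with $n$ leaves is a tree in which some internal node is descended from all other internal nodes; it has a unique cherry (internal node with exactly two descendant leaves). Its canonical label vector $(x_1,\dots,x_n)$ has $x_1,x_2$ the labels of the two cherry leaves and, for $3\leqslant i\leqslant n$, $x_i$ the label of the leaf separated from the root by $n-i+1$ edges (vectors differing only by swapping $x_1,x_2$ describe the same tree). Internal nodes are numbered $1,\dots,n-1$ from the cherry (node 1) to the root (node $n-1$), so node $i$ has descendant leaves $x_1,\dots,x_{i+1}$; internal edge $i$ is the edge immediately above node $i$, the tree being considered to possess an extra edge above its root (edge $n-1$). A node or edge is considered descended from itself. A coalescent history for $(G,S)$ is a function $h$ from the internal nodes of $G$ to the internal edges of $S$ (including the edge above the root) such that (1) for each internal node $v$ of $G$, every label of a leaf descended from $v$ in $G$ labels a leaf of $S$ descended from edge $h(v)$; and (2) whenever internal node $v_2$ is descended from internal node $v_1$ in $G$, edge $h(v_2)$ is descended from edge $h(v_1)$ in $S$. A monotonic path from $(0,0)$ to $(a,b)$ is a sequence of lattice points starting at $(0,0)$ and ending at $(a,b)$ in which each step adds $(1,0)$ or $(0,1)$; it does not cross above $y=x$ if every point $(x,y)$ on it satisfies $y\leqslant x$. *)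

theory Defs
  imports Main "HOL-Library.FuncSet"
begin

text \<open>A caterpillar tree with n leaves is given by its canonical label vector
  x :: nat \<Rightarrow> 'a, used on indices 1..n. Internal node i (1 \<le> i \<le> n-1) has
  descendant leaves x 1, ..., x (i+1); internal edge i lies immediately above node i
  (edge n-1 being the extra edge above the root).\<close>

definition cat_leaves :: "(nat \<Rightarrow> 'a) \<Rightarrow> nat \<Rightarrow> 'a set" where
  "cat_leaves x i = x ` {1..i+1}"

definition cat_desc :: "nat \<Rightarrow> nat \<Rightarrow> bool" where
  "cat_desc i k \<longleftrightarrow> i \<le> k"

definition coal_histories :: "nat \<Rightarrow> (nat \<Rightarrow> 'a) \<Rightarrow> (nat \<Rightarrow> 'a) \<Rightarrow> (nat \<Rightarrow> nat) set" where
  "coal_histories n g s =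
     {h \<in> {1..n-1} \<rightarrow>\<^sub>E {1..n-1}.
        (\<forall>v\<in>{1..n-1}. cat_leaves g v \<subseteq> cat_leaves s (h v)) \<and>
        (\<forall>v1\<in>{1..n-1}. \<forall>v2\<in>{1..n-1}. cat_desc v2 v1 \<longrightarrow> cat_desc (h v2) (h v1))}"

definition sigma :: "nat \<Rightarrow> (nat \<Rightarrow> 'a) \<Rightarrow> 'a \<Rightarrow> nat" where
  "sigma n s a = (THE i. i \<in> {1..n} \<and> s i = a)"

definition Ffun :: "nat \<Rightarrow> (nat \<Rightarrow> 'a) \<Rightarrow> (nat \<Rightarrow> 'a) \<Rightarrow> nat \<Rightarrow> int" where
  "Ffun n g s j = int (Max ((\<lambda>k. sigma n s (g k)) ` {1..j+1})) - 1"

definition roadblocks :: "nat \<Rightarrow> (nat \<Rightarrow> 'a) \<Rightarrow> (nat \<Rightarrow> 'a) \<Rightarrow> (int \<times> int) set" where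
  "roadblocks n g s = {(i, j). 1 \<le> j \<and> j \<le> i \<and> i \<le> int n - 1 \<and>
                          i < Ffun n g s (nat j)}"

definition monotonic_path :: "(int \<times> int) list \<Rightarrow> int \<Rightarrow> int \<Rightarrow> bool" where
  "monotonic_path p a b \<longleftrightarrow> p \<noteq> [] \<and> hd p = (0,0) \<and> last p = (a,b) \<and>
     (\<forall>k. Suc k < length p \<longrightarrow>
        p ! Suc k = (fst (p ! k) + 1, snd (p ! k)) \<or> p ! Suc k = (fst (p ! k), snd (p ! k) + 1))"

definition not_above_diag :: "(int \<times> int) list \<Rightarrow> bool" where
  "not_above_diag p \<longleftrightarrow> (\<forall>(x,y)\<in>set p. y \<le> x)"

definition roadblock_paths :: "nat \<Rightarrow> (nat \<Rightarrow> 'a) \<Rightarrow> (nat \<Rightarrow> 'a) \<Rightarrow> (int \<times> int) list set" where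
  "roadblock_paths n g s = {p. monotonic_path p (int n - 1) (int n - 1) \<and> not_above_diag p \<and>
                               set p \<inter> roadblocks n g s = {}}"

end

theory Submission
  imports Defs
begin


definition stp :: "int\<times>int \<Rightarrow> int\<times>int \<Rightarrow> bool" where
  "stp u v \<longleftrightarrow> v = (fst u + 1, snd u) \<or> v = (fst u, snd u + 1)"

definition okp :: "(int\<times>int) list \<Rightarrow> bool" where
  "okp p \<longleftrightarrow> (\<forall>k. Suc k < length p \<longrightarrow> stp (p!k) (p!Suc k))"

lemma okp_Cons: "okp (u # q) \<longleftrightarrow> (q = [] \<or> stp u (hd q)) \<and> okp q"
proof
  assume h: "okp (u # q)"
  have "q = [] \<or> stp u (hd q)"
  proof (cases q)
    case (Cons a list)
    then show ?thesis using h[unfolded okp_def, rule_format, of 0] by simp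
  qed simp
  moreover have "okp q" unfolding okp_def
  proof (intro allI impI)
    fix k assume "Suc k < length q"
    then show "stp (q!k) (q!Suc k)" using h[unfolded okp_def, rule_format, of "Suc k"] by simp
  qed
  ultimately show "(q = [] \<or> stp u (hd q)) \<and> okp q" by blast
next
  assume h: "(q = [] \<or> stp u (hd q)) \<and> okp q"
  show "okp (u # q)" unfolding okp_def
  proof (intro allI impI)
    fix k assume k: "Suc k < length (u # q)"
    show "stp ((u#q)!k) ((u#q)!Suc k)"
    proof (cases k)
      case 0
      then show ?thesis using h k by (cases q) auto
    next
      case (Suc m)
      then show ?thesis using h k unfolding okp_def by auto
    qed
  qed
qed

lemma okp_take: "okp p \<Longrightarrow> okp (take m p)"
  unfolding okp_def by auto

lemma L1: "okp q \<Longrightarrow> q \<noteq> [] \<Longrightarrow> z \<in> set q \<Longrightarrow> fst (hd q) \<le> fst z \<and> snd (hd q) \<le> snd z"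
proof (induction q arbitrary: z)
  case Nil then show ?case by simp
next
  case (Cons u r)
  show ?case
  proof (cases "z = u")
    case True then show ?thesis by simp
  next
    case False
    then have z: "z \<in> set r" "r \<noteq> []" using Cons by auto
    have "okp r" "stp u (hd r)" using Cons.prems z(2) by (auto simp: okp_Cons)
    then show ?thesis using Cons.IH[OF _ z(2) z(1)] by (auto simp: stp_def)
  qed
qed

lemma L2: "okp q \<Longrightarrow> q \<noteq> [] \<Longrightarrow> z \<in> set q \<Longrightarrow> fst z \<le> fst (last q) \<and> snd z \<le> snd (last q)"
proof (induction q arbitrary: z)
  case Nil then show ?case by simp
next
  case (Cons u r)
  show ?case
  proof (cases "r = []")
    case True then show ?thesis using Cons by simp
  next
    case False
    have "okp r" "stp u (hd r)" using Cons.prems False by (auto simp: okp_Cons)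
    have hr: "fst (hd r) \<le> fst (last r) \<and> snd (hd r) \<le> snd (last r)"
      using Cons.IH[OF \<open>okp r\<close> False] False by simp
    show ?thesis
    proof (cases "z = u")
      case True then show ?thesis using hr \<open>stp u (hd r)\<close> False by (auto simp: stp_def)
    next
      case False2: False
      then show ?thesis using Cons.IH[OF \<open>okp r\<close> False] Cons.prems False by auto
    qed
  qed
qed

lemma L3: "okp q \<Longrightarrow> q \<noteq> [] \<Longrightarrow> snd (hd q) \<le> j \<Longrightarrow> j \<le> snd (last q) \<Longrightarrow> \<exists>x. (x,j) \<in> set q"
proof (induction q)
  case Nil then show ?case by simp
next
  case (Cons u r)
  show ?case
  proof (cases "j = snd u")
    case True then show ?thesis by (intro exI[of _ "fst u"]) simp
  next
    case False
    then have r: "r \<noteq> []" using Cons.prems by auto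
    have "okp r" "stp u (hd r)" using Cons.prems r by (auto simp: okp_Cons)
    then have "snd (hd r) \<le> j" using False Cons.prems by (auto simp: stp_def)
    then show ?thesis using Cons.IH[OF \<open>okp r\<close> r] Cons.prems r by auto
  qed
qed

lemma Llen: "okp q \<Longrightarrow> q \<noteq> [] \<Longrightarrow> fst (last q) + snd (last q) = fst (hd q) + snd (hd q) + int (length q - 1)"
proof (induction q)
  case Nil then show ?case by simp
next
  case (Cons u r)
  show ?case
  proof (cases "r = []")
    case True then show ?thesis by simp
  next
    case False
    have "okp r" "stp u (hd r)" using Cons.prems False by (auto simp: okp_Cons)
    moreover have "int (length r - 1) + 1 = int (length r)" using False by (cases r) auto
    ultimately show ?thesis using Cons.IH False by (auto simp: stp_def)
  qed
qed

primrec walk :: "(nat \<Rightarrow> nat) \<Rightarrow> int \<Rightarrow> int \<Rightarrow> int \<Rightarrow> nat \<Rightarrow> (int\<times>int) list" where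
  "walk a N x y 0 = [(x,y)]"
| "walk a N x y (Suc k) = (x,y) # (if y < N \<and> int (a (nat (y+1))) \<le> x then walk a N x (y+1) k else walk a N (x+1) y k)"

lemma hd_walk[simp]: "hd (walk a N x y k) = (x,y)" by (cases k) simp_all
lemma walk_ne[simp]: "walk a N x y k \<noteq> []" by (cases k) simp_all

lemma okp_walk: "okp (walk a N x y k)"
proof (induction k arbitrary: x y)
  case 0 then show ?case by (simp add: okp_def)
next
  case (Suc k)
  then show ?case by (cases "y < N \<and> int (a (nat (y+1))) \<le> x") (auto simp: okp_Cons stp_def)
qed

definition Inv where
  "Inv a N x y k \<longleftrightarrow> x + y + int k = 2*N \<and> 0 \<le> y \<and> y \<le> x \<and> x \<le> N \<and>
     (y < N \<longrightarrow> x \<le> int (a (nat (y+1)))) \<and> (1 \<le> y \<longrightarrow> int (a (nat y)) \<le> x)"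

definition Aok where
  "Aok a N \<longleftrightarrow> (\<forall>j. 1 \<le> int j \<and> int j \<le> N \<longrightarrow> int j \<le> int (a j) \<and> int (a j) \<le> N) \<and>
     (\<forall>i j. 1 \<le> i \<and> i \<le> j \<and> int j \<le> N \<longrightarrow> a i \<le> a j)"

lemma Inv_zero: "Inv a N x y 0 \<Longrightarrow> x = N \<and> y = N"
  unfolding Inv_def by auto

lemma Inv_up: assumes "Aok a N" "Inv a N x y (Suc k)" "y < N" "int (a (nat (y+1))) \<le> x"
  shows "Inv a N x (y+1) k"
proof -
  have y0: "0 \<le> y" using assms(2) by (simp add: Inv_def)
  have e: "x = int (a (nat (y+1)))" using assms by (simp add: Inv_def)
  have "1 \<le> int (nat (y+1))" "int (nat (y+1)) \<le> N" using assms(3) y0 by auto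
  then have "int (nat (y+1)) \<le> int (a (nat (y+1)))" using assms(1) unfolding Aok_def by blast
  then have "y + 1 \<le> x" using e y0 by simp
  moreover have "y + 1 < N \<longrightarrow> x \<le> int (a (nat (y+1+1)))"
  proof
    assume "y+1 < N"
    then have "1 \<le> nat (y+1)" "nat (y+1) \<le> nat (y+1+1)" "int (nat (y+1+1)) \<le> N" using y0 by auto
    then have "a (nat (y+1)) \<le> a (nat (y+1+1))" using assms(1) unfolding Aok_def by blast
    then show "x \<le> int (a (nat (y+1+1)))" using e by simp
  qed
  moreover have "x + (y+1) + int k = 2*N" "x \<le> N" using assms(2) unfolding Inv_def by auto
  ultimately show ?thesis using assms(4) y0 unfolding Inv_def by simp
qed

lemma Inv_right: assumes "Aok a N" "Inv a N x y (Suc k)" "\<not> (y < N \<and> int (a (nat (y+1))) \<le> x)"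
  shows "Inv a N (x+1) y k"
proof -
  have y0: "0 \<le> y" using assms(2) by (simp add: Inv_def)
  have "x + 1 \<le> N"
  proof (cases "y < N")
    case True
    then have "x < int (a (nat (y+1)))" using assms(3) by simp
    moreover have "int (a (nat (y+1))) \<le> N" using assms(1) True y0 unfolding Aok_def by auto
    ultimately show ?thesis by simp
  next
    case False
    then show ?thesis using assms(2) unfolding Inv_def by auto
  qed
  then show ?thesis using assms(2,3) unfolding Inv_def by auto
qed

lemma W_main: "Aok a N \<Longrightarrow> Inv a N x y k \<Longrightarrow> last (walk a N x y k) = (N,N) \<and>
  (\<forall>z\<in>set (walk a N x y k). 0 \<le> snd z \<and> snd z \<le> fst z \<and> fst z \<le> N \<and> (1 \<le> snd z \<longrightarrow> int (a (nat (snd z))) \<le> fst z))"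
proof (induction k arbitrary: x y)
  case 0
  then show ?case using Inv_zero[OF "0.prems"(2)] unfolding Inv_def by auto
next
  case (Suc k)
  have here: "0 \<le> y \<and> y \<le> x \<and> x \<le> N \<and> (1 \<le> y \<longrightarrow> int (a (nat y)) \<le> x)"
    using Suc.prems(2) unfolding Inv_def by auto
  show ?case
  proof (cases "y < N \<and> int (a (nat (y+1))) \<le> x")
    case True
    then show ?thesis using Suc.IH[OF Suc.prems(1) Inv_up[OF Suc.prems] ] here True by auto
  next
    case False
    then show ?thesis using Suc.IH[OF Suc.prems(1) Inv_right[OF Suc.prems False]] here False by auto
  qed
qed

lemma W4: "Aok a N \<Longrightarrow> Inv a N x y k \<Longrightarrow> y < int j \<Longrightarrow> int j \<le> N \<Longrightarrow> (int (a j), int j) \<in> set (walk a N x y k)"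
proof (induction k arbitrary: x y)
  case 0
  then show ?case using Inv_zero[OF "0.prems"(2)] by auto
next
  case (Suc k)
  show ?case
  proof (cases "y < N \<and> int (a (nat (y+1))) \<le> x")
    case True
    show ?thesis
    proof (cases "y + 1 = int j")
      case True2: True
      then have "x = int (a j)" using True Suc.prems(2) unfolding Inv_def by force
      then have "(int (a j), int j) = hd (walk a N x (y+1) k)" using True2 by simp
      then have "(int (a j), int j) \<in> set (walk a N x (y+1) k)" using hd_in_set walk_ne by metis
      then show ?thesis using True by simp
    next
      case False
      then show ?thesis using Suc.IH[OF Suc.prems(1) Inv_up[OF Suc.prems(1,2)]] True Suc.prems by auto
    qed
  next
    case False
    then show ?thesis using Suc.IH[OF Suc.prems(1) Inv_right[OF Suc.prems(1,2) False]] Suc.prems False by auto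
  qed
qed

lemma walk_surj: "okp q \<Longrightarrow> q \<noteq> [] \<Longrightarrow> last q = (N,N) \<Longrightarrow> hd q = (x0,y0) \<Longrightarrow> 0 \<le> y0 \<Longrightarrow>
  (\<forall>j. y0 < int j \<and> int j \<le> N \<longrightarrow> (int (a j), int j) \<in> set q \<and> (\<forall>x'. (x', int j) \<in> set q \<longrightarrow> int (a j) \<le> x'))
  \<Longrightarrow> q = walk a N x0 y0 (length q - 1)"
proof (induction q arbitrary: x0 y0)
  case Nil then show ?case by simp
next
  case (Cons u r)
  have u: "u = (x0,y0)" using Cons.prems by simp
  show ?case
  proof (cases "r = []")
    case True then show ?thesis using u by simp
  next
    case False
    have okr: "okp r" and st: "stp u (hd r)" using Cons.prems False by (auto simp: okp_Cons)
    have lr: "last r = (N,N)" using Cons.prems False by simp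
    have len: "length (u # r) - 1 = Suc (length r - 1)" using False by (cases r) auto
    have hdr_last: "snd (hd r) \<le> N" using L1[OF okr False last_in_set[OF False]] lr by simp
    show ?thesis
    proof (cases "hd r = (x0, y0+1)")
      case True
      have yN: "y0 < N" using hdr_last True by simp
      have inq: "(x0, y0+1) \<in> set (u#r)" using True hd_in_set[OF False] by (metis list.set_intros(2))
      have "int (a (nat (y0+1))) \<le> x0"
        using Cons.prems(6)[rule_format, of "nat (y0+1)"] Cons.prems(5) yN inq by auto
      then have c: "y0 < N \<and> int (a (nat (y0+1))) \<le> x0" using yN by simp
      have "r = walk a N x0 (y0+1) (length r - 1)"
      proof (rule Cons.IH[OF okr False lr True])
        show "0 \<le> y0 + 1" using Cons.prems by simp
        show "\<forall>j. y0 + 1 < int j \<and> int j \<le> N \<longrightarrow> (int (a j), int j) \<in> set r \<and> (\<forall>x'. (x', int j) \<in> set r \<longrightarrow> int (a j) \<le> x')"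
          using Cons.prems(6) u by fastforce
      qed
      then have "walk a N x0 y0 (Suc (length r - 1)) = u # r" using c u by simp
      then show ?thesis using len by metis
    next
      case False2: False
      then have hr: "hd r = (x0+1, y0)" using st u by (auto simp: stp_def)
      have c: "\<not> (y0 < N \<and> int (a (nat (y0+1))) \<le> x0)"
      proof
        assume c: "y0 < N \<and> int (a (nat (y0+1))) \<le> x0"
        have "(int (a (nat (y0+1))), y0+1) \<in> set (u#r)"
          using Cons.prems(6)[rule_format, of "nat (y0+1)"] Cons.prems(5) c by auto
        then have "(int (a (nat (y0+1))), y0+1) \<in> set r" using u by auto
        from L1[OF okr False this] hr c show False by simp
      qed
      have e: "\<And>m. walk a N x0 y0 (Suc m) = (x0,y0) # walk a N (x0+1) y0 m" using c by (simp only: walk.simps if_False)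
      have "r = walk a N (x0+1) y0 (length r - 1)"
      proof (rule Cons.IH[OF okr False lr hr])
        show "0 \<le> y0" using Cons.prems by simp
        show "\<forall>j. y0 < int j \<and> int j \<le> N \<longrightarrow> (int (a j), int j) \<in> set r \<and> (\<forall>x'. (x', int j) \<in> set r \<longrightarrow> int (a j) \<le> x')"
          using Cons.prems(6) u by fastforce
      qed
      then have "walk a N x0 y0 (Suc (length r - 1)) = u # r" using c u e by metis
      then show ?thesis using len by metis
    qed
  qed
qed



lemma sigma_s: "bij_betw s {1..n} X \<Longrightarrow> i \<in> {1..n} \<Longrightarrow> sigma n s (s i) = i"
proof -
  assume b: "bij_betw s {1..n} X" and i: "i \<in> {1..n}"
  have inj: "inj_on s {1..n}" using b unfolding bij_betw_def by blast
  show ?thesis unfolding sigma_def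
  proof (rule the_equality)
    show "i \<in> {1..n} \<and> s i = s i" using i by simp
    fix j assume "j \<in> {1..n} \<and> s j = s i"
    then show "j = i" using inj i unfolding inj_on_def by blast
  qed
qed

lemma sigma_in: "bij_betw s {1..n} X \<Longrightarrow> x \<in> X \<Longrightarrow> sigma n s x \<in> {1..n} \<and> s (sigma n s x) = x"
proof -
  assume b: "bij_betw s {1..n} X" and x: "x \<in> X"
  then obtain i where i: "i \<in> {1..n}" "x = s i" by (auto simp: bij_betw_def)
  then show ?thesis using sigma_s[OF b i(1)] by simp
qed

lemma aux_le: "((M::nat) \<le> e+1) = (int M - 1 \<le> int e)" by linarith

lemma leaves_iff:
  assumes bg: "bij_betw g {1..n} X" and bs: "bij_betw s {1..n} X" and v: "1 \<le> v" "v+1 \<le> n"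
  shows "cat_leaves g v \<subseteq> cat_leaves s e \<longleftrightarrow> Ffun n g s v \<le> int e"
proof -
  have gk: "g k \<in> X" if "k \<in> {1..v+1}" for k using that v bg by (auto simp: bij_betw_def)
  have one: "g k \<in> s ` {1..e+1} \<longleftrightarrow> sigma n s (g k) \<le> e+1" if "k \<in> {1..v+1}" for k
  proof
    assume "g k \<in> s ` {1..e+1}"
    then obtain i where i: "i \<in> {1..e+1}" "g k = s i" by auto
    show "sigma n s (g k) \<le> e+1"
    proof (cases "i \<le> n")
      case True
      then show ?thesis using sigma_s[OF bs, of i] i by auto
    next
      case False
      then show ?thesis using sigma_in[OF bs gk[OF that]] i by auto
    qed
  next
    assume "sigma n s (g k) \<le> e+1"
    moreover have "sigma n s (g k) \<in> {1..n}" "s (sigma n s (g k)) = g k" using sigma_in[OF bs gk[OF that]] by auto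
    ultimately show "g k \<in> s ` {1..e+1}" by (metis atLeastAtMost_iff image_eqI)
  qed
  have "cat_leaves g v \<subseteq> cat_leaves s e \<longleftrightarrow> (\<forall>k\<in>{1..v+1}. g k \<in> s ` {1..e+1})"
    unfolding cat_leaves_def by blast
  also have "\<dots> \<longleftrightarrow> (\<forall>k\<in>{1..v+1}. sigma n s (g k) \<le> e+1)"
    using one by (meson ball_cong)
  also have "\<dots> \<longleftrightarrow> Max ((\<lambda>k. sigma n s (g k)) ` {1..v+1}) \<le> e+1"
  proof -
    have fin: "finite ((\<lambda>k. sigma n s (g k)) ` {1..v+1})" by simp
    have ne: "(\<lambda>k. sigma n s (g k)) ` {1..v+1} \<noteq> {}" by simp
    show ?thesis using Max_le_iff[OF fin ne] by blast
  qed
  also have "\<dots> \<longleftrightarrow> Ffun n g s v \<le> int e" unfolding Ffun_def by (rule aux_le)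
  finally show ?thesis .
qed

lemma F_ge:
  assumes bg: "bij_betw g {1..n} X" and bs: "bij_betw s {1..n} X" and v: "1 \<le> v" "v+1 \<le> n"
  shows "int v \<le> Ffun n g s v"
proof -
  define A where "A = (\<lambda>k. sigma n s (g k)) ` {1..v+1}"
  have gk: "g k \<in> X" if "k \<in> {1..v+1}" for k using that v bg by (auto simp: bij_betw_def)
  have inj: "inj_on (\<lambda>k. sigma n s (g k)) {1..v+1}"
  proof (rule inj_onI)
    fix k1 k2 assume k: "k1 \<in> {1..v+1}" "k2 \<in> {1..v+1}" "sigma n s (g k1) = sigma n s (g k2)"
    then have "g k1 = g k2" using sigma_in[OF bs gk[OF k(1)]] sigma_in[OF bs gk[OF k(2)]] by metis
    moreover have "k1 \<in> {1..n}" "k2 \<in> {1..n}" using k v by auto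
    ultimately show "k1 = k2" using bg unfolding bij_betw_def inj_on_def by blast
  qed
  have cA: "card A = v+1" unfolding A_def using card_image[OF inj] by simp
  have fA: "finite A" "A \<noteq> {}" unfolding A_def by auto
  have "A \<subseteq> {1..Max A}"
  proof
    fix a assume a: "a \<in> A"
    then obtain k where k: "k \<in> {1..v+1}" "a = sigma n s (g k)" unfolding A_def by blast
    then have "1 \<le> a" using sigma_in[OF bs gk[OF k(1)]] by simp
    moreover have "a \<le> Max A" using fA a by simp
    ultimately show "a \<in> {1..Max A}" by simp
  qed
  then have "card A \<le> Max A" using card_mono[of "{1..Max A}" A] by simp
  then show ?thesis unfolding Ffun_def A_def[symmetric] using cA by linarith
qed

lemma mp_iff: "monotonic_path p a b \<longleftrightarrow> p \<noteq> [] \<and> hd p = (0,0) \<and> last p = (a,b) \<and> okp p"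
  by (simp add: monotonic_path_def okp_def stp_def)



theorem proposition1:
  fixes n :: nat and X :: "'a set" and g s :: "nat \<Rightarrow> 'a"
  assumes "n \<ge> 2"
    and "bij_betw g {1..n} X"
    and "bij_betw s {1..n} X"
  shows "\<exists>f. bij_betw f (coal_histories n g s) (roadblock_paths n g s)"
proof -
  define N where "N = int n - 1"
  define K where "K = 2*(n-1)"
  define H where "H = coal_histories n g s"
  define P where "P = roadblock_paths n g s"
  have n2: "n \<ge> 2" using assms(1) .
  have Fge: "int v \<le> Ffun n g s v" if "v \<in> {1..n-1}" for v
  proof -
    have "1 \<le> v" "v+1 \<le> n" using that n2 by auto
    then show ?thesis using F_ge[OF assms(2,3)] by blast
  qed
  have Hchar: "h \<in> H \<longleftrightarrow> h \<in> {1..n-1} \<rightarrow>\<^sub>E {1..n-1} \<and> (\<forall>v\<in>{1..n-1}. Ffun n g s v \<le> int (h v)) \<and>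
      (\<forall>v1\<in>{1..n-1}. \<forall>v2\<in>{1..n-1}. v2 \<le> v1 \<longrightarrow> h v2 \<le> h v1)" for h
  proof -
    have "cat_leaves g v \<subseteq> cat_leaves s e \<longleftrightarrow> Ffun n g s v \<le> int e" if "v \<in> {1..n-1}" for v e
    proof -
      have "1 \<le> v" "v+1 \<le> n" using that n2 by auto
      then show ?thesis using leaves_iff[OF assms(2,3)] by blast
    qed
    then show ?thesis unfolding H_def coal_histories_def cat_desc_def by auto
  qed
  have AokH: "Aok h N" if "h \<in> H" for h
  proof -
    have h: "h \<in> {1..n-1} \<rightarrow>\<^sub>E {1..n-1}" "\<forall>v\<in>{1..n-1}. Ffun n g s v \<le> int (h v)"
      "\<forall>v1\<in>{1..n-1}. \<forall>v2\<in>{1..n-1}. v2 \<le> v1 \<longrightarrow> h v2 \<le> h v1" using iffD1[OF Hchar[of h] that] by blast+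
    show ?thesis unfolding Aok_def
    proof (intro conjI allI impI)
      fix j assume j: "1 \<le> int j \<and> int j \<le> N"
      then have jj: "j \<in> {1..n-1}" unfolding N_def by auto
      show "int j \<le> int (h j)" using Fge[OF jj] h(2) jj by fastforce
      have "h j \<le> n - 1" using h(1) jj by auto
      then show "int (h j) \<le> N" unfolding N_def using n2 by linarith
    next
      fix i j assume "1 \<le> i \<and> i \<le> j \<and> int j \<le> N"
      then show "h i \<le> h j" using h(3) unfolding N_def by auto
    qed
  qed
  have InvH: "Inv h N 0 0 K" for h
    unfolding Inv_def N_def K_def using n2 by auto
  define f where "f h = walk h N 0 0 K" for h
  have NN: "N = int n - 1" using N_def by simp
  have rec: "(LEAST x::nat. (int x, int j) \<in> set (f h)) = h j" if h: "h \<in> H" and j: "j \<in> {1..n-1}" for h j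
  proof (rule Least_equality)
    have "0 < int j" "int j \<le> N" using j unfolding N_def by auto
    then show "(int (h j), int j) \<in> set (f h)" unfolding f_def using W4[OF AokH[OF h] InvH] by blast
  next
    fix y assume "(int y, int j) \<in> set (f h)"
    then have "1 \<le> int j \<longrightarrow> int (h (nat (int j))) \<le> int y"
      using W_main[OF AokH[OF h] InvH] unfolding f_def by fastforce
    then show "h j \<le> y" using j by simp
  qed
  have inj: "inj_on f H"
  proof (rule inj_onI)
    fix h1 h2 assume h: "h1 \<in> H" "h2 \<in> H" "f h1 = f h2"
    have e1: "h1 \<in> {1..n-1} \<rightarrow>\<^sub>E {1..n-1}" "h2 \<in> {1..n-1} \<rightarrow>\<^sub>E {1..n-1}" using iffD1[OF Hchar[of h1] h(1)] iffD1[OF Hchar[of h2] h(2)] by blast+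
    show "h1 = h2"
    proof
      fix j show "h1 j = h2 j"
      proof (cases "j \<in> {1..n-1}")
        case True
        then show ?thesis using rec[OF h(1) True] rec[OF h(2) True] h(3) by metis
      next
        case False
        then show ?thesis using PiE_arb[OF e1(1) False] PiE_arb[OF e1(2) False] by simp
      qed
    qed
  qed
  have sub: "f h \<in> P" if h: "h \<in> H" for h
  proof -
    note W = W_main[OF AokH[OF h] InvH[of h]]
    have hv: "\<forall>v\<in>{1..n-1}. Ffun n g s v \<le> int (h v)" using iffD1[OF Hchar[of h] h] by blast
    have "monotonic_path (f h) (int n - 1) (int n - 1)"
      unfolding mp_iff f_def using W okp_walk NN by simp
    moreover have "not_above_diag (f h)" unfolding not_above_diag_def f_def using W by auto
    moreover have "set (f h) \<inter> roadblocks n g s = {}"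
    proof (rule ccontr)
      assume "set (f h) \<inter> roadblocks n g s \<noteq> {}"
      then obtain i j where ij: "(i,j) \<in> set (f h)" "(i,j) \<in> roadblocks n g s" by auto
      then have r: "1 \<le> j" "j \<le> i" "i \<le> int n - 1" "i < Ffun n g s (nat j)" unfolding roadblocks_def by auto
      have "int (h (nat j)) \<le> i" "j \<le> N" using W ij(1) r(1) unfolding f_def by fastforce+
      moreover have "nat j \<in> {1..n-1}" using r(1) \<open>j \<le> N\<close> unfolding N_def by auto
      ultimately show False using hv r(4) by fastforce
    qed
    ultimately show ?thesis unfolding P_def roadblock_paths_def by simp
  qed
  have sup: "p \<in> f ` H" if p: "p \<in> P" for p
  proof -
    have pm: "p \<noteq> []" "hd p = (0,0)" "last p = (N,N)" "okp p" using p unfolding P_def roadblock_paths_def mp_iff NN by auto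
    have pd: "\<forall>(x,y)\<in>set p. y \<le> x" using p unfolding P_def roadblock_paths_def not_above_diag_def by auto
    have pr: "set p \<inter> roadblocks n g s = {}" using p unfolding P_def roadblock_paths_def by auto
    define h where "h j = (if j \<in> {1..n-1} then (LEAST x::nat. (int x, int j) \<in> set p) else undefined)" for j
    have Kf: "(int (h j), int j) \<in> set p \<and> (\<forall>x'. (x', int j) \<in> set p \<longrightarrow> int (h j) \<le> x')" if j: "j \<in> {1..n-1}" for j
    proof -
      have "0 \<le> int j" "int j \<le> N" using j unfolding N_def by auto
      then obtain x where x: "(x, int j) \<in> set p" using L3[OF pm(4) pm(1), of "int j"] pm by auto
      have "0 \<le> x" using L1[OF pm(4) pm(1) x] pm by simp
      then have ex: "(int (nat x), int j) \<in> set p" using x by simp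
      have hj: "h j = (LEAST x::nat. (int x, int j) \<in> set p)" using j h_def by simp
      have "(int (h j), int j) \<in> set p" unfolding hj using LeastI[of "\<lambda>x. (int x, int j) \<in> set p", OF ex] .
      moreover have "int (h j) \<le> x'" if "(x', int j) \<in> set p" for x'
      proof -
        have "0 \<le> x'" using L1[OF pm(4) pm(1) that] pm by simp
        then have "(int (nat x'), int j) \<in> set p" using that by simp
        then have "h j \<le> nat x'" unfolding hj by (rule Least_le)
        then show ?thesis using \<open>0 \<le> x'\<close> by linarith
      qed
      ultimately show ?thesis by blast
    qed
    have hb: "Ffun n g s j \<le> int (h j) \<and> int (h j) \<le> N" if j: "j \<in> {1..n-1}" for j
    proof -
      have m: "(int (h j), int j) \<in> set p" using Kf[OF j] by blast
      have le: "int (h j) \<le> N" using L2[OF pm(4) pm(1) m] pm by simp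
      have "int j \<le> int (h j)" using pd m by auto
      moreover have "(int (h j), int j) \<notin> roadblocks n g s" using pr m by auto
      ultimately have "\<not> int (h j) < Ffun n g s (nat (int j))"
        using j le unfolding roadblocks_def N_def by auto
      then show ?thesis using le by simp
    qed
    have mono: "h v2 \<le> h v1" if v: "v1 \<in> {1..n-1}" "v2 \<in> {1..n-1}" "v2 \<le> v1" for v1 v2
    proof -
      have m: "(int (h v1), int v1) \<in> set p" using Kf[OF v(1)] by blast
      then obtain u w where uw: "p = u @ (int (h v1), int v1) # w" by (meson split_list)
      define q where "q = u @ [(int (h v1), int v1)]"
      have qt: "q = take (length u + 1) p" unfolding q_def uw by simp
      have okq: "okp q" unfolding qt using okp_take pm(4) by blast
      have qne: "q \<noteq> []" unfolding q_def by simp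
      have hq: "hd q = (0,0)" using pm(2) unfolding q_def uw by (cases u) auto
      have lq: "last q = (int (h v1), int v1)" unfolding q_def by simp
      obtain x where x: "(x, int v2) \<in> set q" using L3[OF okq qne, of "int v2"] hq lq v by auto
      have "x \<le> int (h v1)" using L2[OF okq qne x] lq by simp
      moreover have "(x, int v2) \<in> set p" using x unfolding q_def uw by auto
      then have "int (h v2) \<le> x" using Kf[OF v(2)] by blast
      ultimately show ?thesis by simp
    qed
    have hH: "h \<in> H"
    proof -
      have "h \<in> {1..n-1} \<rightarrow>\<^sub>E {1..n-1}"
      proof (rule PiE_I)
        fix j assume j: "j \<in> {1..n-1}"
        have "int j \<le> int (h j)" using hb[OF j] Fge[OF j] by linarith
        moreover have "int (h j) \<le> int n - 1" using hb[OF j] unfolding N_def by simp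
        ultimately show "h j \<in> {1..n-1}" using j by auto
      next
        fix j assume "j \<notin> {1..n-1}" then show "h j = undefined" unfolding h_def by (simp only: if_False)
      qed
      moreover have "\<forall>v\<in>{1..n-1}. Ffun n g s v \<le> int (h v)" using hb by blast
      moreover have "\<forall>v1\<in>{1..n-1}. \<forall>v2\<in>{1..n-1}. v2 \<le> v1 \<longrightarrow> h v2 \<le> h v1" using mono by blast
      ultimately show ?thesis using Hchar[of h] by (simp only:)
    qed
    have "p = walk h N 0 0 (length p - 1)"
    proof (rule walk_surj[OF pm(4) pm(1) pm(3) pm(2)])
      show "0 \<le> (0::int)" by simp
      show "\<forall>j. 0 < int j \<and> int j \<le> N \<longrightarrow> (int (h j), int j) \<in> set p \<and> (\<forall>x'. (x', int j) \<in> set p \<longrightarrow> int (h j) \<le> x')"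
      proof (intro allI impI)
        fix j assume "0 < int j \<and> int j \<le> N"
        then have jj: "j \<in> {1..n-1}" unfolding N_def by auto
        show "(int (h j), int j) \<in> set p \<and> (\<forall>x'. (x', int j) \<in> set p \<longrightarrow> int (h j) \<le> x')" using Kf[OF jj] .
      qed
    qed
    moreover have "length p - 1 = K"
    proof -
      have "N + N = 0 + 0 + int (length p - 1)" using Llen[OF pm(4) pm(1)] pm by simp
      then show ?thesis unfolding K_def N_def using n2 by linarith
    qed
    ultimately have "p = f h" unfolding f_def by metis
    then show ?thesis using hH by blast
  qed
  have "bij_betw f H P"
  proof -
    have "f ` H = P"
    proof (rule equalityI)
      show "f ` H \<subseteq> P" using sub by (rule image_subsetI)
      show "P \<subseteq> f ` H" using sup by (rule subsetI)
    qed
    then show ?thesis using inj unfolding bij_betw_def by (rule conjI[rotated])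
  qed
  then show ?thesis unfolding H_def P_def by blast
qed


end
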